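(* Let $q$ be a prime power, let $\pi$ be the plane $x_4=0$ and $T=\langle(0,0,0,1)\rangle$ in ${\rm PG}(3,q)$, and let $C$ be the group defined in the context. Then $C$ has $q+1$ orbits, each of size $q^3-1$, on the lines of ${\rm PG}(3,q)$ not contained in $\pi$ and not passing through $T$, and $C$ acts semiregularly on the $q^3-1$ points of ${\rm PG}(3,q)\setminus(\pi\cup\{T\})$.
   Context: Points of ${\rm PG}(3,q)$ are $\langle(x_1,x_2,x_3,x_4)\rangle$ (column vectors, matrices acting on the left). Let $\sigma\in{\rm GL}(3,q)$ be a Singer cycle (element of order $q^3-1$). $C$ is the group of projectivities of ${\rm PG}(3,q)$ induced by the matrices $\begin{pmatrix} A & 0\\ 0 & 1\end{pmatrix}$ with $A\in\langle\sigma\rangle$; it has order $q^3-1$, fixes $T$ and $\pi$, induces on $\pi$ a Singer cyclic group $C_1$ of ${\rm PGL}(3,q)$ (order $q^2+q+1$), and contains the $q-1$ homologies with centre $T$ and axis $\pi$. *)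

theory Defs
  imports "Jordan_Normal_Form.Matrix"
begin

text \<open>Vectors of the ambient space F_q^4 (coordinates x1..x4 are indices 0..3).\<close>
definition V4 :: "'a::field vec set" where
  "V4 = carrier_vec 4"

text \<open>Points of PG(3,q): 1-dimensional subspaces of F^4.\<close>
definition pg_points :: "'a::field vec set set" where
  "pg_points = {S. \<exists>v\<in>V4. v \<noteq> 0\<^sub>v 4 \<and> S = {c \<cdot>\<^sub>v v | c. True}}"

text \<open>Lines of PG(3,q): 2-dimensional subspaces of F^4.\<close>
definition pg_lines :: "'a::field vec set set" where
  "pg_lines = {S. \<exists>u\<in>V4. \<exists>w\<in>V4.
      (\<forall>a b. a \<cdot>\<^sub>v u + b \<cdot>\<^sub>v w = 0\<^sub>v 4 \<longrightarrow> a = 0 \<and> b = 0) \<and>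
      S = {a \<cdot>\<^sub>v u + b \<cdot>\<^sub>v w | a b. True}}"

text \<open>The plane pi: x4 = 0 (as a set of vectors), and the point T = <(0,0,0,1)>.\<close>
definition plane_pi :: "'a::field vec set" where
  "plane_pi = {v \<in> V4. v $ 3 = 0}"

definition point_T :: "'a::field vec set" where
  "point_T = {c \<cdot>\<^sub>v unit_vec 4 3 | c. True}"

text \<open>Action of a matrix (projectivity) on subspaces.\<close>
definition act :: "'a::field mat \<Rightarrow> 'a vec set \<Rightarrow> 'a vec set" where
  "act M S = (\<lambda>v. M *\<^sub>v v) ` S"

text \<open>The group C: matrices diag(A,1) with A in the cyclic group generated by sigma.\<close>
definition groupC :: "'a::field mat \<Rightarrow> 'a mat set" where
  "groupC \<sigma> = {four_block_mat (\<sigma> ^\<^sub>m k) (0\<^sub>m 3 1) (0\<^sub>m 1 3) (1\<^sub>m 1) | k. True}"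

definition orbitC :: "'a::field mat \<Rightarrow> 'a vec set \<Rightarrow> 'a vec set set" where
  "orbitC \<sigma> S = {act g S | g. g \<in> groupC \<sigma>}"

text \<open>Lines not contained in pi and not through T.\<close>
definition lines_off :: "'a::field vec set set" where
  "lines_off = {l \<in> pg_lines. \<not> l \<subseteq> plane_pi \<and> \<not> point_T \<subseteq> l}"

text \<open>Points of PG(3,q) not in pi and different from T.\<close>
definition points_off :: "'a::field vec set set" where
  "points_off = {P \<in> pg_points. \<not> P \<subseteq> plane_pi \<and> P \<noteq> point_T}"

end

theory Submission
  imports Defs
begin


lemma sum3: "(\<Sum>i\<in>{0..<3::nat}. f i) = f 0 + f 1 + (f 2::'a::comm_monoid_add)"
  by (simp add: eval_nat_numeral atLeast0_lessThan_Suc add.commute add.left_commute)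

lemma less3: "(i::nat) < 3 \<longleftrightarrow> i = 0 \<or> i = 1 \<or> i = 2" by auto

lemma ch3:
  fixes A :: "'a::field mat"
  assumes A: "A \<in> carrier_mat 3 3"
  shows "\<exists>a b c. A * A * A = a \<cdot>\<^sub>m (A * A) + b \<cdot>\<^sub>m A + c \<cdot>\<^sub>m 1\<^sub>m 3"
proof -
  define e where "e = (\<lambda>i j. A $$ (i,j))"
  let ?a = "e 0 0 + e 1 1 + e 2 2"
  let ?b = "- (e 0 0 * e 1 1 - e 0 1 * e 1 0 + e 0 0 * e 2 2 - e 0 2 * e 2 0 + e 1 1 * e 2 2 - e 1 2 * e 2 1)"
  let ?c = "e 0 0 * (e 1 1 * e 2 2 - e 1 2 * e 2 1) - e 0 1 * (e 1 0 * e 2 2 - e 1 2 * e 2 0) + e 0 2 * (e 1 0 * e 2 1 - e 1 1 * e 2 0)"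
  have "A * A * A = ?a \<cdot>\<^sub>m (A * A) + ?b \<cdot>\<^sub>m A + ?c \<cdot>\<^sub>m 1\<^sub>m 3"
  proof (rule eq_matI)
    fix i j assume i: "i < dim_row (?a \<cdot>\<^sub>m (A * A) + ?b \<cdot>\<^sub>m A + ?c \<cdot>\<^sub>m 1\<^sub>m 3)"
      and j: "j < dim_col (?a \<cdot>\<^sub>m (A * A) + ?b \<cdot>\<^sub>m A + ?c \<cdot>\<^sub>m 1\<^sub>m 3)"
    have i3: "i < 3" and j3: "j < 3" using i j A by auto
    have AA: "\<And>i j. i < 3 \<Longrightarrow> j < 3 \<Longrightarrow> (A * A) $$ (i,j) = e i 0 * e 0 j + e i 1 * e 1 j + e i 2 * e 2 j"
      using A by (simp add: scalar_prod_def sum3 e_def)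
    have AAA: "(A * A * A) $$ (i,j) = (A*A) $$ (i,0) * e 0 j + (A*A) $$ (i,1) * e 1 j + (A*A) $$ (i,2) * e 2 j"
      using A i3 j3 by (simp add: scalar_prod_def sum3 e_def) (simp add: algebra_simps)
    have R: "(?a \<cdot>\<^sub>m (A * A) + ?b \<cdot>\<^sub>m A + ?c \<cdot>\<^sub>m 1\<^sub>m 3) $$ (i,j) = ?a * (A*A) $$ (i,j) + ?b * e i j + ?c * (if i = j then 1 else 0)"
      using A i3 j3 by (simp add: e_def)
    show "(A * A * A) $$ (i, j) = (?a \<cdot>\<^sub>m (A * A) + ?b \<cdot>\<^sub>m A + ?c \<cdot>\<^sub>m 1\<^sub>m 3) $$ (i, j)"
      unfolding AAA R using i3 j3 unfolding less3
      apply (elim disjE)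
      apply (simp_all add: AA)
      apply (simp_all add: algebra_simps)
      done
  qed (use A in auto)
  thus ?thesis by blast
qed



lemma vec3_eqI:
  fixes x y :: "'a vec"
  assumes "x \<in> carrier_vec 3" "y \<in> carrier_vec 3" "x $ 0 = y $ 0" "x $ 1 = y $ 1" "x $ 2 = y $ 2"
  shows "x = y"
  using assms by (intro eq_vecI) (auto simp: less3)

lemma mat3_eqI:
  fixes A B :: "'a mat"
  assumes "A \<in> carrier_mat 3 3" "B \<in> carrier_mat 3 3" "\<And>i j. i < 3 \<Longrightarrow> j < 3 \<Longrightarrow> A $$ (i,j) = B $$ (i,j)"
  shows "A = B"
  using assms by (intro eq_matI) auto

lemma mat_vec3: "A \<in> carrier_mat 3 3 \<Longrightarrow> x \<in> carrier_vec 3 \<Longrightarrow> i < 3 \<Longrightarrow>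
   (A *\<^sub>v x) $ i = A $$ (i,0) * x $ 0 + A $$ (i,1) * x $ 1 + A $$ (i,2) * x $ 2"
  by (simp add: scalar_prod_def sum3)

lemma card_cv: "card (carrier_vec n :: 'b::finite vec set) = card (UNIV :: 'b set)^n"
proof -
  have e: "carrier_vec n = vec_of_list ` {xs. set xs \<subseteq> (UNIV::'b set) \<and> length xs = n}"
  proof
    show "carrier_vec n \<subseteq> vec_of_list ` {xs. set xs \<subseteq> (UNIV::'b set) \<and> length xs = n}"
    proof
      fix v :: "'b vec" assume "v \<in> carrier_vec n"
      thus "v \<in> vec_of_list ` {xs. set xs \<subseteq> UNIV \<and> length xs = n}"
        by (intro image_eqI[where x="list_of_vec v"]) (auto simp: vec_list)
    qed
  next show "vec_of_list ` {xs. set xs \<subseteq> (UNIV::'b set) \<and> length xs = n} \<subseteq> carrier_vec n"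
      by (auto intro: carrier_vecI)
  qed
  have "inj_on (vec_of_list :: 'b list \<Rightarrow> 'b vec) {xs. set xs \<subseteq> UNIV \<and> length xs = n}"
    by (rule inj_on_inverseI[where g=list_of_vec]) (simp add: list_vec)
  hence "card (carrier_vec n :: 'b vec set) = card {xs. set xs \<subseteq> (UNIV::'b set) \<and> length xs = n}"
    unfolding e by (rule card_image)
  also have "\<dots> = card (UNIV :: 'b set)^n" by (rule card_lists_length_eq) simp
  finally show ?thesis .
qed

lemma finite_cv: "finite (carrier_vec n :: 'b::finite vec set)"
  by (rule card_ge_0_finite) (simp add: card_cv finite_UNIV_card_ge_0)

definition ext :: "'a::field vec \<Rightarrow> 'a \<Rightarrow> 'a vec" where
  "ext x t = vec 4 (\<lambda>i. if i < 3 then x $ i else t)"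

definition top :: "'a::field vec \<Rightarrow> 'a vec" where
  "top v = vec 3 (\<lambda>i. v $ i)"

lemma ext_carr[simp]: "ext x t \<in> carrier_vec 4" "dim_vec (ext x t) = 4"
  unfolding ext_def by auto

lemma top_carr[simp]: "top v \<in> carrier_vec 3" "dim_vec (top v) = 3"
  unfolding top_def by auto

lemma ext_idx[simp]: "ext x t $ 3 = t" "i < 3 \<Longrightarrow> ext x t $ i = x $ i"
  unfolding ext_def by auto

lemma top_idx[simp]: "i < 3 \<Longrightarrow> top v $ i = v $ i"
  unfolding top_def by auto

lemma ext_eq[simp]:
  assumes "x \<in> carrier_vec 3" "y \<in> carrier_vec 3"
  shows "(ext x s = ext y t) \<longleftrightarrow> (x = y \<and> s = t)"
proof
  assume e: "ext x s = ext y t"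
  have "x = y"
  proof (rule eq_vecI)
    fix i assume "i < dim_vec y"
    hence "i < 3" using assms by simp
    thus "x $ i = y $ i" using e ext_idx(2)[of i x s] ext_idx(2)[of i y t] by simp
  qed (use assms in simp)
  moreover have "s = t" using e ext_idx(1)[of x s] ext_idx(1)[of y t] by simp
  ultimately show "x = y \<and> s = t" ..
qed simp

lemma i3: "(i::nat) < 4 \<Longrightarrow> \<not> i < 3 \<Longrightarrow> i = 3" by auto

lemma ext_top: "v \<in> carrier_vec 4 \<Longrightarrow> ext (top v) (v $ 3) = v"
  by (intro eq_vecI) (auto simp: ext_def top_def dest: i3)

lemma ext_smult: "c \<cdot>\<^sub>v ext x t = ext (c \<cdot>\<^sub>v x) (c * t)" if "x \<in> carrier_vec 3"
  using that by (intro eq_vecI) (auto simp: ext_def)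

lemma ext_add: "ext x s + ext y t = ext (x + y) (s + t)" if "x \<in> carrier_vec 3" "y \<in> carrier_vec 3"
  using that by (intro eq_vecI) (auto simp: ext_def)

lemma ext_zero: "0\<^sub>v 4 = ext (0\<^sub>v 3) 0"
  by (intro eq_vecI) (auto simp: ext_def)

lemma ext_unit: "unit_vec 4 3 = ext (0\<^sub>v 3) 1"
  by (intro eq_vecI) (auto simp: ext_def unit_vec_def)

lemma sum4: "(\<Sum>i\<in>{0..<4::nat}. f i) = f 0 + f 1 + f 2 + (f 3::'a::comm_monoid_add)"
  by (simp add: eval_nat_numeral atLeast0_lessThan_Suc add.commute add.left_commute)

lemma less4: "(i::nat) < 4 \<longleftrightarrow> i = 0 \<or> i = 1 \<or> i = 2 \<or> i = 3" by auto

definition pt :: "'a::field vec \<Rightarrow> 'a vec set" where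
  "pt v = {c \<cdot>\<^sub>v v | c. True}"

lemma pt_scale: assumes "a \<noteq> 0" shows "pt (a \<cdot>\<^sub>v v) = pt v"
proof
  show "pt (a \<cdot>\<^sub>v v) \<subseteq> pt v" unfolding pt_def by (auto simp: smult_smult_assoc)
  show "pt v \<subseteq> pt (a \<cdot>\<^sub>v v)"
  proof
    fix w assume "w \<in> pt v"
    then obtain c where "w = c \<cdot>\<^sub>v v" unfolding pt_def by auto
    hence "w = (c / a) \<cdot>\<^sub>v (a \<cdot>\<^sub>v v)" using assms by (simp add: smult_smult_assoc)
    thus "w \<in> pt (a \<cdot>\<^sub>v v)" unfolding pt_def by blast
  qed
qed

lemma pg_points_pt: "pg_points = {pt v | v. v \<in> carrier_vec 4 \<and> v \<noteq> 0\<^sub>v 4}"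
  unfolding pg_points_def pt_def V4_def by auto

lemma point_T_pt: "point_T = pt (ext (0\<^sub>v 3) 1)"
  unfolding point_T_def pt_def ext_unit ..

lemma pt_sub: "v \<in> carrier_vec 4 \<Longrightarrow> pt v \<subseteq> carrier_vec 4"
  unfolding pt_def by auto

lemma pt_ext_off:
  assumes x: "x \<in> carrier_vec 3" "x \<noteq> 0\<^sub>v 3"
  shows "pt (ext x 1) \<in> points_off"
proof -
  have ne: "ext x 1 \<noteq> 0\<^sub>v 4" unfolding ext_zero using x by simp
  have "pt (ext x 1) \<in> pg_points" unfolding pg_points_pt using ne by auto
  moreover have "\<not> pt (ext x 1) \<subseteq> plane_pi"
  proof
    assume "pt (ext x 1) \<subseteq> plane_pi"
    moreover have "ext x 1 \<in> pt (ext x 1)" unfolding pt_def by (rule CollectI, rule exI[of _ 1]) simp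
    ultimately show False unfolding plane_pi_def by auto
  qed
  moreover have "pt (ext x 1) \<noteq> point_T"
  proof
    assume "pt (ext x 1) = point_T"
    moreover have "ext x 1 \<in> pt (ext x 1)" unfolding pt_def by (rule CollectI, rule exI[of _ 1]) simp
    ultimately obtain c where "ext x 1 = c \<cdot>\<^sub>v ext (0\<^sub>v 3) 1" unfolding point_T_pt pt_def by auto
    hence "ext x 1 = ext (c \<cdot>\<^sub>v 0\<^sub>v 3) c" by (simp add: ext_smult)
    hence "x = c \<cdot>\<^sub>v 0\<^sub>v 3" using x by simp
    hence "x = 0\<^sub>v 3" by auto
    thus False using x by simp
  qed
  ultimately show ?thesis unfolding points_off_def by simp
qed

lemma pt_ext_inj:
  assumes "x \<in> carrier_vec 3" "y \<in> carrier_vec 3" "pt (ext x 1) = pt (ext y 1)"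
  shows "x = y"
proof -
  have "ext y 1 \<in> pt (ext y 1)" unfolding pt_def by (rule CollectI, rule exI[of _ 1]) simp
  then obtain c where "ext y 1 = c \<cdot>\<^sub>v ext x 1" using assms(3) unfolding pt_def by auto
  hence "ext y 1 = ext (c \<cdot>\<^sub>v x) c" using assms by (simp add: ext_smult)
  hence "y = c \<cdot>\<^sub>v x" "c = 1" using assms by simp_all
  thus ?thesis using assms by simp
qed

lemma points_off_ext:
  assumes "P \<in> points_off"
  shows "\<exists>x. x \<in> carrier_vec 3 \<and> x \<noteq> 0\<^sub>v 3 \<and> P = pt (ext x 1)"
proof -
  from assms obtain v where v: "v \<in> carrier_vec 4" "v \<noteq> 0\<^sub>v 4" and P: "P = pt v"
    and npi: "\<not> P \<subseteq> plane_pi" and nT: "P \<noteq> point_T"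
    unfolding points_off_def pg_points_pt by auto
  let ?x = "top v" and ?t = "v $ 3"
  have vv: "v = ext ?x ?t" using ext_top[OF v(1)] by simp
  have t: "?t \<noteq> 0"
  proof
    assume t0: "?t = 0"
    have "P \<subseteq> plane_pi"
    proof
      fix w assume "w \<in> P"
      then obtain c where "w = c \<cdot>\<^sub>v v" unfolding P pt_def by auto
      thus "w \<in> plane_pi" unfolding plane_pi_def V4_def using v t0 by simp
    qed
    thus False using npi by simp
  qed
  have ext_sc: "v = ?t \<cdot>\<^sub>v ext ((1 / ?t) \<cdot>\<^sub>v ?x) 1"
    using t by (subst vv, subst ext_smult) (simp_all add: smult_smult_assoc)
  have Pe: "P = pt (ext ((1 / ?t) \<cdot>\<^sub>v ?x) 1)" unfolding P using t by (subst ext_sc, rule pt_scale)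
  have x0: "(1 / ?t) \<cdot>\<^sub>v ?x \<noteq> 0\<^sub>v 3"
  proof
    assume "(1 / ?t) \<cdot>\<^sub>v ?x = 0\<^sub>v 3"
    hence "P = point_T" unfolding Pe point_T_pt by simp
    thus False using nT by simp
  qed
  show ?thesis using Pe x0 by (intro exI[of _ "(1 / ?t) \<cdot>\<^sub>v ?x"]) simp
qed

definition L :: "'a::field vec \<Rightarrow> 'a vec \<Rightarrow> 'a vec set" where
  "L x y = {ext (s \<cdot>\<^sub>v x + c \<cdot>\<^sub>v y) s | s c. True}"

definition good :: "'a::field vec \<Rightarrow> 'a vec \<Rightarrow> bool" where
  "good x y \<longleftrightarrow> x \<in> carrier_vec 3 \<and> y \<in> carrier_vec 3 \<and> y \<noteq> 0\<^sub>v 3 \<and> (\<forall>c. x \<noteq> c \<cdot>\<^sub>v y)"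

lemma smult_zero_imp:
  assumes "y \<in> carrier_vec n" "y \<noteq> 0\<^sub>v n" "b \<cdot>\<^sub>v y = 0\<^sub>v n" shows "b = (0::'a::field)"
proof (rule ccontr)
  assume "b \<noteq> 0"
  hence "y = (1/b) \<cdot>\<^sub>v (b \<cdot>\<^sub>v y)" by (simp add: smult_smult_assoc)
  also have "\<dots> = 0\<^sub>v n" using assms(3) by auto
  finally show False using assms(2) by simp
qed

lemma L_mem: "x \<in> carrier_vec 3 \<Longrightarrow> y \<in> carrier_vec 3 \<Longrightarrow> ext (s \<cdot>\<^sub>v x + c \<cdot>\<^sub>v y) s \<in> L x y"
  unfolding L_def by blast

lemma L_a: "x \<in> carrier_vec 3 \<Longrightarrow> y \<in> carrier_vec 3 \<Longrightarrow> ext x 1 \<in> L x y"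
proof -
  assume x: "x \<in> carrier_vec 3" and y: "y \<in> carrier_vec 3"
  have "1 \<cdot>\<^sub>v x + 0 \<cdot>\<^sub>v y = x" using x y by (intro vec3_eqI) auto
  thus ?thesis using L_mem[OF x y, of 1 0] by simp
qed

lemma L_b: "x \<in> carrier_vec 3 \<Longrightarrow> y \<in> carrier_vec 3 \<Longrightarrow> ext y 0 \<in> L x y"
proof -
  assume x: "x \<in> carrier_vec 3" and y: "y \<in> carrier_vec 3"
  have "0 \<cdot>\<^sub>v x + 1 \<cdot>\<^sub>v y = y" using x y by (intro vec3_eqI) auto
  thus ?thesis using L_mem[OF x y, of 0 1] by simp
qed

lemma L_sub: "L x y \<subseteq> carrier_vec 4"
  unfolding L_def by auto

lemma L_memD:
  assumes x: "x \<in> carrier_vec 3" and y: "y \<in> carrier_vec 3" and z: "z \<in> carrier_vec 3"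
    and m: "ext z t \<in> L x y"
  shows "\<exists>c. z = t \<cdot>\<^sub>v x + c \<cdot>\<^sub>v y"
proof -
  from m obtain s c where "ext z t = ext (s \<cdot>\<^sub>v x + c \<cdot>\<^sub>v y) s" unfolding L_def by auto
  hence "z = s \<cdot>\<^sub>v x + c \<cdot>\<^sub>v y" "t = s" using x y z by simp_all
  thus ?thesis by blast
qed

lemma T_in_L:
  assumes x: "x \<in> carrier_vec 3" and y: "y \<in> carrier_vec 3" and T: "point_T \<subseteq> L x y"
  shows "\<exists>c. x = c \<cdot>\<^sub>v y"
proof -
  have "ext (0\<^sub>v 3) 1 \<in> point_T" unfolding point_T_pt pt_def by (rule CollectI, rule exI[of _ 1]) simp
  hence "ext (0\<^sub>v 3) 1 \<in> L x y" using T by auto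
  then obtain c where c: "0\<^sub>v 3 = 1 \<cdot>\<^sub>v x + c \<cdot>\<^sub>v y" using L_memD[OF x y zero_carrier_vec] by blast
  have "x = (- c) \<cdot>\<^sub>v y"
  proof (rule vec3_eqI)
    have "\<And>i. i < 3 \<Longrightarrow> 0 = x $ i + c * y $ i" using c x y
      by (metis carrier_vecD index_add_vec(1) index_smult_vec(1) index_zero_vec(1) mult_1 smult_carrier_vec)
    thus "x $ 0 = (- c \<cdot>\<^sub>v y) $ 0" "x $ 1 = (- c \<cdot>\<^sub>v y) $ 1" "x $ 2 = (- c \<cdot>\<^sub>v y) $ 2"
      using y by (auto simp: eq_neg_iff_add_eq_0 add.commute)
  qed (use x y in auto)
  thus ?thesis by blast
qed

lemma L_span2:
  assumes x: "x \<in> carrier_vec 3" and y: "y \<in> carrier_vec 3"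
  shows "L x y = {a \<cdot>\<^sub>v ext x 1 + b \<cdot>\<^sub>v ext y 0 | a b. True}"
proof -
  have "a \<cdot>\<^sub>v ext x 1 + b \<cdot>\<^sub>v ext y 0 = ext (a \<cdot>\<^sub>v x + b \<cdot>\<^sub>v y) a" for a b
    using x y by (simp add: ext_smult ext_add)
  thus ?thesis unfolding L_def by auto
qed

lemma L_line:
  assumes g: "good x y"
  shows "L x y \<in> lines_off"
proof -
  have x: "x \<in> carrier_vec 3" and y: "y \<in> carrier_vec 3" and y0: "y \<noteq> 0\<^sub>v 3" and nx: "\<forall>c. x \<noteq> c \<cdot>\<^sub>v y"
    using g unfolding good_def by auto
  have ind: "\<forall>a b. a \<cdot>\<^sub>v ext x 1 + b \<cdot>\<^sub>v ext y 0 = 0\<^sub>v 4 \<longrightarrow> a = 0 \<and> b = 0"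
  proof (intro allI impI)
    fix a b assume "a \<cdot>\<^sub>v ext x 1 + b \<cdot>\<^sub>v ext y 0 = 0\<^sub>v 4"
    moreover have "a \<cdot>\<^sub>v ext x 1 + b \<cdot>\<^sub>v ext y 0 = ext (a \<cdot>\<^sub>v x + b \<cdot>\<^sub>v y) (a * 1 + b * 0)"
      using x y by (simp only: ext_smult ext_add smult_carrier_vec)
    ultimately have "ext (a \<cdot>\<^sub>v x + b \<cdot>\<^sub>v y) (a * 1 + b * 0) = ext (0\<^sub>v 3) 0" by (simp only: ext_zero)
    moreover have cc: "a \<cdot>\<^sub>v x + b \<cdot>\<^sub>v y \<in> carrier_vec 3" using x y by simp
    ultimately have ae0: "a \<cdot>\<^sub>v x + b \<cdot>\<^sub>v y = 0\<^sub>v 3 \<and> a * 1 + b * 0 = 0" using ext_eq[OF cc zero_carrier_vec] by blast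
    have a: "a = 0" using ae0 by simp
    have e: "a \<cdot>\<^sub>v x + b \<cdot>\<^sub>v y = 0\<^sub>v 3" using ae0 by blast
    have "b \<cdot>\<^sub>v y = a \<cdot>\<^sub>v x + b \<cdot>\<^sub>v y" using a x y by (intro vec3_eqI) auto
    hence "b \<cdot>\<^sub>v y = 0\<^sub>v 3" using e by simp
    hence "b = 0" using smult_zero_imp[OF y y0] by simp
    thus "a = 0 \<and> b = 0" using a by simp
  qed
  have "L x y \<in> pg_lines" unfolding pg_lines_def V4_def
    by (rule CollectI, rule bexI[of _ "ext x 1"], rule bexI[of _ "ext y 0"]) (use ind L_span2[OF x y] in auto)
  moreover have "\<not> L x y \<subseteq> plane_pi" using L_a[OF x y] unfolding plane_pi_def by auto
  moreover have "\<not> point_T \<subseteq> L x y" using T_in_L[OF x y] nx by auto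
  ultimately show ?thesis unfolding lines_off_def by simp
qed

lemma smult_zero_vec3: "(d::'a::field) \<cdot>\<^sub>v 0\<^sub>v n = 0\<^sub>v n"
  by (intro eq_vecI) auto

lemma lin_comb_ext:
  assumes "u \<in> carrier_vec 4" "w \<in> carrier_vec 4"
  shows "a \<cdot>\<^sub>v u + b \<cdot>\<^sub>v w = ext (a \<cdot>\<^sub>v top u + b \<cdot>\<^sub>v top w) (a * u $ 3 + b * w $ 3)"
proof -
  have "a \<cdot>\<^sub>v u + b \<cdot>\<^sub>v w = a \<cdot>\<^sub>v ext (top u) (u $ 3) + b \<cdot>\<^sub>v ext (top w) (w $ 3)"
    using ext_top[OF assms(1)] ext_top[OF assms(2)] by simp
  also have "\<dots> = ext (a \<cdot>\<^sub>v top u + b \<cdot>\<^sub>v top w) (a * u $ 3 + b * w $ 3)"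
    by (simp only: ext_smult ext_add top_carr smult_carrier_vec)
  finally show ?thesis .
qed

lemma LR0:
  assumes u: "u \<in> carrier_vec 4" and w: "w \<in> carrier_vec 4"
    and ind: "\<forall>a b. a \<cdot>\<^sub>v u + b \<cdot>\<^sub>v w = 0\<^sub>v 4 \<longrightarrow> a = 0 \<and> b = 0"
    and s1: "u $ 3 \<noteq> 0"
  shows "\<exists>x y. x \<in> carrier_vec 3 \<and> y \<in> carrier_vec 3 \<and> y \<noteq> 0\<^sub>v 3 \<and>
           {a \<cdot>\<^sub>v u + b \<cdot>\<^sub>v w | a b. True} = L x y"
proof -
  define u' where "u' = top u"
  define w' where "w' = top w"
  define x where "x = (1 / u $ 3) \<cdot>\<^sub>v u'"
  define y where "y = (w $ 3) \<cdot>\<^sub>v u' + (- u $ 3) \<cdot>\<^sub>v w'"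
  have u': "u' \<in> carrier_vec 3" and w': "w' \<in> carrier_vec 3" unfolding u'_def w'_def by simp_all
  have x: "x \<in> carrier_vec 3" and y: "y \<in> carrier_vec 3" unfolding x_def y_def using u' w' by simp_all
  have y0: "y \<noteq> 0\<^sub>v 3"
  proof
    assume y0: "y = 0\<^sub>v 3"
    have "(w $ 3) \<cdot>\<^sub>v u + (- u $ 3) \<cdot>\<^sub>v w = ext y (w $ 3 * u $ 3 + - u $ 3 * w $ 3)"
      unfolding lin_comb_ext[OF u w] y_def u'_def w'_def ..
    also have "\<dots> = 0\<^sub>v 4" unfolding y0 ext_zero by simp
    finally have "- u $ 3 = 0" using ind by blast
    thus False using s1 by simp
  qed
  have "{a \<cdot>\<^sub>v u + b \<cdot>\<^sub>v w | a b. True} = L x y"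
  proof
    show "{a \<cdot>\<^sub>v u + b \<cdot>\<^sub>v w | a b. True} \<subseteq> L x y"
    proof
      fix v assume "v \<in> {a \<cdot>\<^sub>v u + b \<cdot>\<^sub>v w | a b. True}"
      then obtain a b where v: "v = a \<cdot>\<^sub>v u + b \<cdot>\<^sub>v w" by auto
      let ?s = "a * u $ 3 + b * w $ 3" and ?c = "- b / u $ 3"
      have "a \<cdot>\<^sub>v u' + b \<cdot>\<^sub>v w' = ?s \<cdot>\<^sub>v x + ?c \<cdot>\<^sub>v y"
        unfolding x_def y_def using u' w' s1 by (intro vec3_eqI) (auto simp: field_simps)
      hence "v = ext (?s \<cdot>\<^sub>v x + ?c \<cdot>\<^sub>v y) ?s" unfolding v lin_comb_ext[OF u w] u'_def w'_def by simp
      thus "v \<in> L x y" unfolding L_def by blast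
    qed
    show "L x y \<subseteq> {a \<cdot>\<^sub>v u + b \<cdot>\<^sub>v w | a b. True}"
    proof
      fix v assume "v \<in> L x y"
      then obtain s c where v: "v = ext (s \<cdot>\<^sub>v x + c \<cdot>\<^sub>v y) s" unfolding L_def by auto
      let ?a = "s / u $ 3 + c * w $ 3" and ?b = "- c * u $ 3"
      have "?a \<cdot>\<^sub>v u' + ?b \<cdot>\<^sub>v w' = s \<cdot>\<^sub>v x + c \<cdot>\<^sub>v y"
        unfolding x_def y_def using u' w' s1 by (intro vec3_eqI) (auto simp: field_simps)
      moreover have "?a * u $ 3 + ?b * w $ 3 = s" using s1 by (simp add: field_simps)
      ultimately have "v = ?a \<cdot>\<^sub>v u + ?b \<cdot>\<^sub>v w" unfolding v lin_comb_ext[OF u w] u'_def w'_def by simp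
      thus "v \<in> {a \<cdot>\<^sub>v u + b \<cdot>\<^sub>v w | a b. True}" by blast
    qed
  qed
  thus ?thesis using x y y0 by blast
qed

lemma LR:
  assumes l: "l \<in> lines_off"
  shows "\<exists>x y. good x y \<and> l = L x y"
proof -
  from l obtain u w where u: "u \<in> carrier_vec 4" and w: "w \<in> carrier_vec 4"
    and ind: "\<forall>a b. a \<cdot>\<^sub>v u + b \<cdot>\<^sub>v w = 0\<^sub>v 4 \<longrightarrow> a = 0 \<and> b = 0"
    and lu: "l = {a \<cdot>\<^sub>v u + b \<cdot>\<^sub>v w | a b. True}"
    and npi: "\<not> l \<subseteq> plane_pi" and nT: "\<not> point_T \<subseteq> l"
    unfolding lines_off_def pg_lines_def V4_def by blast
  have "\<exists>x y. x \<in> carrier_vec 3 \<and> y \<in> carrier_vec 3 \<and> y \<noteq> 0\<^sub>v 3 \<and> l = L x y"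
  proof (cases "u $ 3 = 0")
    case False thus ?thesis using LR0[OF u w ind] lu by auto
  next
    case True
    have w3': "w $ 3 \<noteq> 0"
    proof
      assume w3: "w $ 3 = 0"
      have "l \<subseteq> plane_pi"
      proof
        fix v assume "v \<in> l"
        then obtain a b where "v = a \<cdot>\<^sub>v u + b \<cdot>\<^sub>v w" using lu by auto
        thus "v \<in> plane_pi" unfolding plane_pi_def V4_def using u w w3 True by simp
      qed
      thus False using npi by simp
    qed
    have comm: "\<And>a b. a \<cdot>\<^sub>v w + b \<cdot>\<^sub>v u = b \<cdot>\<^sub>v u + a \<cdot>\<^sub>v w"
      using u w by (intro comm_add_vec) auto
    have ind': "\<forall>a b. a \<cdot>\<^sub>v w + b \<cdot>\<^sub>v u = 0\<^sub>v 4 \<longrightarrow> a = 0 \<and> b = 0"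
      unfolding comm using ind by blast
    have "l = {a \<cdot>\<^sub>v w + b \<cdot>\<^sub>v u | a b. True}"
      unfolding lu comm by blast
    thus ?thesis using LR0[OF w u ind' w3'] by auto
  qed
  then obtain x y where x: "x \<in> carrier_vec 3" and y: "y \<in> carrier_vec 3" and y0: "y \<noteq> 0\<^sub>v 3"
    and lxy: "l = L x y" by blast
  have "\<forall>c. x \<noteq> c \<cdot>\<^sub>v y"
  proof (intro allI notI)
    fix c assume xc: "x = c \<cdot>\<^sub>v y"
    have "point_T \<subseteq> l"
    proof
      fix v :: "'a vec" assume "v \<in> point_T"
      then obtain d where "v = d \<cdot>\<^sub>v ext (0\<^sub>v 3) 1" unfolding point_T_pt pt_def by auto
      hence "v = ext (0\<^sub>v 3) d" by (simp add: ext_smult smult_zero_vec3)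
      moreover have "0\<^sub>v 3 = d \<cdot>\<^sub>v x + (- d * c) \<cdot>\<^sub>v y" unfolding xc using y by (intro vec3_eqI) auto
      ultimately show "v \<in> l" unfolding lxy L_def by auto
    qed
    thus False using nT by simp
  qed
  thus ?thesis unfolding good_def using x y y0 lxy by blast
qed

locale singer =
  fixes \<sigma> :: "'a::{field,finite} mat" and q :: nat
  assumes cardq: "card (UNIV :: 'a set) = q"
    and carr: "\<sigma> \<in> carrier_mat 3 3"
    and ordN: "\<sigma> ^\<^sub>m (q^3 - 1) = 1\<^sub>m 3"
    and minN: "\<forall>k. 0 < k \<and> k < q^3 - 1 \<longrightarrow> \<sigma> ^\<^sub>m k \<noteq> 1\<^sub>m 3"
begin

abbreviation "N \<equiv> q^3 - 1"

lemma q2: "q \<ge> 2"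
proof -
  have "{0::'a, 1} \<subseteq> UNIV" by auto
  hence "card {0::'a, 1} \<le> q" using cardq by (metis card_mono finite)
  thus ?thesis by simp
qed

lemma Npos: "N > 0"
proof -
  have "q^3 \<ge> 2^3" using q2 by (intro power_mono) auto
  thus ?thesis by simp
qed

lemma pw_carr[simp]: "\<sigma> ^\<^sub>m k \<in> carrier_mat 3 3"
  using carr by simp

lemma pw_add: "\<sigma> ^\<^sub>m (a + b) = \<sigma> ^\<^sub>m a * \<sigma> ^\<^sub>m b"
proof (induction b)
  case 0 then show ?case using carr by simp
next
  case (Suc b)
  have "\<sigma> ^\<^sub>m (a + Suc b) = \<sigma> ^\<^sub>m (a + b) * \<sigma>" by simp
  also have "\<dots> = \<sigma> ^\<^sub>m a * (\<sigma> ^\<^sub>m b * \<sigma>)" using Suc carr by (simp add: assoc_mult_mat[of _ 3 3 _ 3 _ 3])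
  finally show ?case by simp
qed

lemma pw_N_mult: "\<sigma> ^\<^sub>m (N * t) = 1\<^sub>m 3"
proof (induction t)
  case 0 then show ?case using carr by simp
next
  case (Suc t)
  have "\<sigma> ^\<^sub>m (N * Suc t) = \<sigma> ^\<^sub>m (N * t) * \<sigma> ^\<^sub>m N" by (simp add: pw_add[symmetric] add.commute)
  then show ?case using Suc ordN by simp
qed

lemma pw_mod: "\<sigma> ^\<^sub>m k = \<sigma> ^\<^sub>m (k mod N)"
proof -
  have "\<sigma> ^\<^sub>m k = \<sigma> ^\<^sub>m (N * (k div N) + k mod N)" by simp
  also have "\<dots> = \<sigma> ^\<^sub>m (N * (k div N)) * \<sigma> ^\<^sub>m (k mod N)" by (rule pw_add)
  also have "\<dots> = \<sigma> ^\<^sub>m (k mod N)" unfolding pw_N_mult by (rule left_mult_one_mat) (rule pw_carr)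
  finally show ?thesis .
qed

lemma pw_vec_carr[simp]: "x \<in> carrier_vec 3 \<Longrightarrow> \<sigma> ^\<^sub>m k *\<^sub>v x \<in> carrier_vec 3"
  by (rule mult_mat_vec_carrier) simp_all

lemma pw_vec_add: "x \<in> carrier_vec 3 \<Longrightarrow> \<sigma> ^\<^sub>m a *\<^sub>v (\<sigma> ^\<^sub>m b *\<^sub>v x) = \<sigma> ^\<^sub>m (a + b) *\<^sub>v x"
  by (simp add: pw_add assoc_mult_mat_vec[of _ 3 3 _ 3 x])

lemma pw_vec_zero:
  assumes x: "x \<in> carrier_vec 3" and z: "\<sigma> ^\<^sub>m k *\<^sub>v x = 0\<^sub>v 3"
  shows "x = 0\<^sub>v 3"
proof -
  obtain m where m: "N = Suc m" using Npos by (cases N) auto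
  have e: "k * (N - 1) + k = N * k" unfolding m by (simp add: algebra_simps)
  have "\<sigma> ^\<^sub>m (k * (N - 1)) *\<^sub>v (\<sigma> ^\<^sub>m k *\<^sub>v x) = \<sigma> ^\<^sub>m (N * k) *\<^sub>v x"
    using x by (simp only: pw_vec_add e)
  also have "\<dots> = x" using x by (simp only: pw_N_mult one_mult_mat_vec)
  finally have "x = \<sigma> ^\<^sub>m (k * (N - 1)) *\<^sub>v (\<sigma> ^\<^sub>m k *\<^sub>v x)" ..
  also have "\<dots> = 0\<^sub>v 3" unfolding z by (intro eq_vecI) (use carr in \<open>auto simp: scalar_prod_def\<close>)
  finally show ?thesis .
qed

lemma pw_inj: assumes "i < N" "j < N" "\<sigma> ^\<^sub>m i = \<sigma> ^\<^sub>m j" shows "i = j"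
proof (rule ccontr)
  assume ne: "i \<noteq> j"
  have main: "\<sigma> ^\<^sub>m a = \<sigma> ^\<^sub>m b \<Longrightarrow> a < b \<Longrightarrow> b < N \<Longrightarrow> False" for a b
  proof -
    assume e: "\<sigma> ^\<^sub>m a = \<sigma> ^\<^sub>m b" and ab: "a < b" "b < N"
    have "\<sigma> ^\<^sub>m (N - a + b) = \<sigma> ^\<^sub>m (N - a) * \<sigma> ^\<^sub>m b" by (rule pw_add)
    also have "\<dots> = \<sigma> ^\<^sub>m (N - a) * \<sigma> ^\<^sub>m a" using e by simp
    also have "\<dots> = \<sigma> ^\<^sub>m N" using ab by (simp add: pw_add[symmetric])
    finally have "\<sigma> ^\<^sub>m (N - a + b) = 1\<^sub>m 3" using ordN by simp
    moreover have "\<sigma> ^\<^sub>m (N - a + b) = \<sigma> ^\<^sub>m (b - a)"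
    proof -
      have "N - a + b = (b - a) + N * 1" using ab by simp
      hence "\<sigma> ^\<^sub>m (N - a + b) = \<sigma> ^\<^sub>m (b - a) * \<sigma> ^\<^sub>m (N * 1)" by (simp only: pw_add)
      moreover have "\<sigma> ^\<^sub>m (b - a) * 1\<^sub>m 3 = \<sigma> ^\<^sub>m (b - a)" by (rule right_mult_one_mat) (rule pw_carr)
      ultimately show ?thesis unfolding pw_N_mult by simp
    qed
    moreover have "\<sigma> ^\<^sub>m (b - a) \<noteq> 1\<^sub>m 3" using minN ab by auto
    ultimately show False by simp
  qed
  show False
  proof (cases "i < j")
    case True thus False using main assms by blast
  next
    case False hence "j < i" using ne by simp
    thus False using main assms by metis
  qed
qed

definition lin :: "'a \<Rightarrow> 'a \<Rightarrow> 'a \<Rightarrow> 'a mat" where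
  "lin a b c = a \<cdot>\<^sub>m (\<sigma> * \<sigma>) + b \<cdot>\<^sub>m \<sigma> + c \<cdot>\<^sub>m 1\<^sub>m 3"

lemma lin_carr[simp]: "lin a b c \<in> carrier_mat 3 3"
  unfolding lin_def using carr by auto

lemma lin_dims[simp]: "dim_row (lin a b c) = 3" "dim_col (lin a b c) = 3"
  unfolding lin_def using carr by auto

lemma lin_idx: "i < 3 \<Longrightarrow> j < 3 \<Longrightarrow> lin a b c $$ (i,j) = a * (\<sigma> * \<sigma>) $$ (i,j) + b * \<sigma> $$ (i,j) + c * (if i = j then 1 else 0)"
  unfolding lin_def using carr by simp

lemma lin_step: "\<exists>a' b' c'. lin a b c * \<sigma> = lin a' b' c'"
proof -
  obtain \<alpha> \<beta> \<gamma> where ch: "\<sigma> * \<sigma> * \<sigma> = \<alpha> \<cdot>\<^sub>m (\<sigma> * \<sigma>) + \<beta> \<cdot>\<^sub>m \<sigma> + \<gamma> \<cdot>\<^sub>m 1\<^sub>m 3"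
    using ch3[OF carr] by blast
  have s2: "\<sigma> * \<sigma> \<in> carrier_mat 3 3" using carr carr by (rule mult_carrier_mat)
  have e1: "lin a b c * \<sigma> = (a \<cdot>\<^sub>m (\<sigma> * \<sigma>) + b \<cdot>\<^sub>m \<sigma>) * \<sigma> + (c \<cdot>\<^sub>m 1\<^sub>m 3) * \<sigma>"
    unfolding lin_def by (rule add_mult_distrib_mat) (use carr s2 in auto)
  have e2: "(a \<cdot>\<^sub>m (\<sigma> * \<sigma>) + b \<cdot>\<^sub>m \<sigma>) * \<sigma> = (a \<cdot>\<^sub>m (\<sigma> * \<sigma>)) * \<sigma> + (b \<cdot>\<^sub>m \<sigma>) * \<sigma>"
    by (rule add_mult_distrib_mat) (use carr s2 in auto)
  have e3: "(a \<cdot>\<^sub>m (\<sigma> * \<sigma>)) * \<sigma> = a \<cdot>\<^sub>m (\<sigma> * \<sigma> * \<sigma>)"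
    by (rule mult_smult_assoc_mat) (use carr s2 in auto)
  have e4: "(b \<cdot>\<^sub>m \<sigma>) * \<sigma> = b \<cdot>\<^sub>m (\<sigma> * \<sigma>)"
    by (rule mult_smult_assoc_mat) (use carr s2 in auto)
  have e5: "(c \<cdot>\<^sub>m 1\<^sub>m 3) * \<sigma> = c \<cdot>\<^sub>m (1\<^sub>m 3 * \<sigma>)"
    by (rule mult_smult_assoc_mat) (use carr s2 in auto)
  have e6: "1\<^sub>m 3 * \<sigma> = \<sigma>" using carr by (rule left_mult_one_mat)
  have "lin a b c * \<sigma> = a \<cdot>\<^sub>m (\<sigma> * \<sigma> * \<sigma>) + b \<cdot>\<^sub>m (\<sigma> * \<sigma>) + c \<cdot>\<^sub>m \<sigma>"
    by (simp only: e1 e2 e3 e4 e5 e6)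
  also have "\<dots> = lin (a * \<alpha> + b) (a * \<beta> + c) (a * \<gamma>)"
    unfolding ch
  proof (rule mat3_eqI)
    fix i j assume ij: "i < (3::nat)" "j < (3::nat)"
    show "(a \<cdot>\<^sub>m (\<alpha> \<cdot>\<^sub>m (\<sigma> * \<sigma>) + \<beta> \<cdot>\<^sub>m \<sigma> + \<gamma> \<cdot>\<^sub>m 1\<^sub>m 3) + b \<cdot>\<^sub>m (\<sigma> * \<sigma>) + c \<cdot>\<^sub>m \<sigma>) $$ (i, j) =
          lin (a * \<alpha> + b) (a * \<beta> + c) (a * \<gamma>) $$ (i, j)"
      using ij carr s2 by (simp add: lin_idx algebra_simps carrier_matD del: index_mult_mat(1))
  qed (use carr in auto)
  finally show ?thesis by blast
qed

lemma pw_lin: "\<exists>a b c. \<sigma> ^\<^sub>m k = lin a b c"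
proof (induction k)
  case 0
  have "\<sigma> ^\<^sub>m 0 = lin 0 0 1"
    by (rule mat3_eqI) (use carr in \<open>auto simp: lin_idx\<close>)
  then show ?case by blast
next
  case (Suc k)
  then obtain a b c where "\<sigma> ^\<^sub>m k = lin a b c" by blast
  then show ?case using lin_step by simp
qed


definition Kset :: "'a mat set" where "Kset = (\<lambda>(a,b,c). lin a b c) ` UNIV"

definition Gset :: "'a mat set" where "Gset = (\<lambda>k. \<sigma> ^\<^sub>m k) ` {0..<N}"

lemma Kset_card: "finite Kset" "card Kset \<le> q^3"
proof -
  have "card Kset \<le> card (UNIV :: ('a \<times> 'a \<times> 'a) set)"
    unfolding Kset_def by (rule card_image_le) simp
  also have "\<dots> = q^3" by (simp add: cardq UNIV_Times_UNIV[symmetric] card_cartesian_product power3_eq_cube del: UNIV_Times_UNIV)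
  finally show "card Kset \<le> q^3" .
  show "finite Kset" unfolding Kset_def by simp
qed

lemma Gset_card: "card Gset = N"
proof -
  have "inj_on (\<lambda>k. \<sigma> ^\<^sub>m k) {0..<N}" by (rule inj_onI) (use pw_inj in auto)
  thus ?thesis unfolding Gset_def by (simp add: card_image)
qed

lemma lin_K: "lin a b c \<in> Kset"
  unfolding Kset_def by (rule image_eqI[where x="(a,b,c)"]) auto

lemma pw_lin': "\<sigma> ^\<^sub>m k \<in> Kset"
  using pw_lin[of k] lin_K by auto

lemma zero_notin_G: "\<sigma> ^\<^sub>m k \<noteq> 0\<^sub>m 3 3"
proof
  assume z: "\<sigma> ^\<^sub>m k = 0\<^sub>m 3 3"
  have "\<sigma> ^\<^sub>m k *\<^sub>v unit_vec 3 0 = 0\<^sub>v 3" unfolding z by (intro eq_vecI) (auto simp: scalar_prod_def)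
  hence "unit_vec 3 0 = (0\<^sub>v 3 :: 'a vec)" by (rule pw_vec_zero[rotated]) simp
  thus False by (metis index_unit_vec(1) index_zero_vec(1) zero_less_numeral one_neq_zero)
qed

lemma K_eq: "Kset = insert (0\<^sub>m 3 3) Gset"
proof -
  have sub: "insert (0\<^sub>m 3 3) Gset \<subseteq> Kset"
  proof -
    have "lin 0 0 0 = 0\<^sub>m 3 3" by (rule mat3_eqI) (auto simp: lin_idx)
    hence "0\<^sub>m 3 3 \<in> Kset" using lin_K[of 0 0 0] by simp
    moreover have "Gset \<subseteq> Kset" unfolding Gset_def using pw_lin' by blast
    ultimately show ?thesis by simp
  qed
  have nz: "0\<^sub>m 3 3 \<notin> Gset"
  proof
    assume "0\<^sub>m 3 3 \<in> Gset"
    then obtain k where "0\<^sub>m 3 3 = \<sigma> ^\<^sub>m k" unfolding Gset_def by auto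
    thus False using zero_notin_G[of k] by simp
  qed
  have "card (insert (0\<^sub>m 3 3) Gset) = N + 1"
  proof -
    have "finite Gset" unfolding Gset_def by simp
    thus ?thesis using nz Gset_card by simp
  qed
  also have "\<dots> = q^3" using Npos by simp
  finally have "card Kset \<le> card (insert (0\<^sub>m 3 3) Gset)" using Kset_card(2) by linarith
  from card_seteq[OF Kset_card(1) sub this] show ?thesis by simp
qed

lemma key:
  assumes x: "x \<in> carrier_vec 3" "x \<noteq> 0\<^sub>v 3" and e: "\<sigma> ^\<^sub>m k *\<^sub>v x = d \<cdot>\<^sub>v x"
  shows "\<sigma> ^\<^sub>m k = d \<cdot>\<^sub>m 1\<^sub>m 3"
proof -
  obtain a b c where abc: "\<sigma> ^\<^sub>m k = lin a b c" using pw_lin by blast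
  let ?M = "lin a b (c - d)"
  have Mi: "?M $$ (i,j) = (\<sigma> ^\<^sub>m k) $$ (i,j) - d * (if i = j then 1 else 0)" if "i < 3" "j < 3" for i j
    unfolding abc using that by (simp add: lin_idx algebra_simps del: index_mult_mat)
  have Mx: "?M *\<^sub>v x = 0\<^sub>v 3"
  proof (rule vec3_eqI)
    have "\<And>i. i < 3 \<Longrightarrow> (\<sigma> ^\<^sub>m k *\<^sub>v x) $ i = d * x $ i" using e x by simp
    hence h: "\<And>i. i < 3 \<Longrightarrow> (\<sigma> ^\<^sub>m k) $$ (i,0) * x $ 0 + (\<sigma> ^\<^sub>m k) $$ (i,1) * x $ 1 + (\<sigma> ^\<^sub>m k) $$ (i,2) * x $ 2 = d * x $ i"
      using x by (simp add: mat_vec3)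
    show "(?M *\<^sub>v x) $ 0 = 0\<^sub>v 3 $ 0" "(?M *\<^sub>v x) $ 1 = 0\<^sub>v 3 $ 1" "(?M *\<^sub>v x) $ 2 = 0\<^sub>v 3 $ 2"
    proof -
      have r: "(?M *\<^sub>v x) $ i = ((\<sigma> ^\<^sub>m k) $$ (i,0) - d*(if i=0 then 1 else 0)) * x$0
         + ((\<sigma> ^\<^sub>m k) $$ (i,1) - d*(if i=1 then 1 else 0)) * x$1
         + ((\<sigma> ^\<^sub>m k) $$ (i,2) - d*(if i=2 then 1 else 0)) * x$2" if "i < 3" for i
        using mat_vec3[OF lin_carr x(1) that] Mi[OF that] by simp
      show "(?M *\<^sub>v x) $ 0 = 0\<^sub>v 3 $ 0" using r[of 0] h[of 0] by (simp add: algebra_simps)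
      show "(?M *\<^sub>v x) $ 1 = 0\<^sub>v 3 $ 1" using r[of 1] h[of 1] by (simp add: algebra_simps)
      show "(?M *\<^sub>v x) $ 2 = 0\<^sub>v 3 $ 2" using r[of 2] h[of 2] by (simp add: algebra_simps)
    qed
  next show "lin a b (c - d) *\<^sub>v x \<in> carrier_vec 3" by (rule mult_mat_vec_carrier[OF lin_carr x(1)])
  next show "0\<^sub>v 3 \<in> carrier_vec 3" by simp
  qed
  have "?M \<in> Kset" by (rule lin_K)
  hence "?M = 0\<^sub>m 3 3 \<or> ?M \<in> Gset" using K_eq by auto
  moreover have "?M \<notin> Gset"
  proof
    assume "?M \<in> Gset"
    then obtain j where "?M = \<sigma> ^\<^sub>m j" unfolding Gset_def by auto
    thus False using pw_vec_zero[of x j] Mx x by simp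
  qed
  ultimately have M0: "?M = 0\<^sub>m 3 3" by blast
  show ?thesis
  proof (rule mat3_eqI)
    fix i j :: nat assume ij: "i < 3" "j < 3"
    have "?M $$ (i,j) = 0" using M0 ij by simp
    thus "(\<sigma> ^\<^sub>m k) $$ (i, j) = (d \<cdot>\<^sub>m 1\<^sub>m 3) $$ (i, j)" using Mi[OF ij] ij by simp
  qed auto
qed

lemma key1:
  assumes x: "x \<in> carrier_vec 3" "x \<noteq> 0\<^sub>v 3" and e: "\<sigma> ^\<^sub>m k *\<^sub>v x = x"
  shows "\<sigma> ^\<^sub>m k = 1\<^sub>m 3"
proof -
  have "\<sigma> ^\<^sub>m k = 1 \<cdot>\<^sub>m 1\<^sub>m 3" using key[OF x, of k 1] e x by simp
  thus ?thesis by (intro mat3_eqI) auto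
qed

lemma scalar_pw:
  assumes "d \<noteq> 0" shows "\<exists>k. \<sigma> ^\<^sub>m k = d \<cdot>\<^sub>m 1\<^sub>m 3"
proof -
  have "lin 0 0 d = d \<cdot>\<^sub>m 1\<^sub>m 3" by (rule mat3_eqI) (auto simp: lin_idx)
  moreover have "lin 0 0 d \<in> Kset" by (rule lin_K)
  moreover have "d \<cdot>\<^sub>m 1\<^sub>m 3 \<noteq> (0\<^sub>m 3 3 :: 'a mat)"
  proof
    assume "d \<cdot>\<^sub>m 1\<^sub>m 3 = (0\<^sub>m 3 3 :: 'a mat)"
    hence "(d \<cdot>\<^sub>m 1\<^sub>m 3) $$ (0,0) = (0\<^sub>m 3 3 :: 'a mat) $$ (0,0)" by simp
    thus False using assms by simp
  qed
  ultimately have "d \<cdot>\<^sub>m 1\<^sub>m 3 \<in> Gset" using K_eq by auto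
  thus ?thesis unfolding Gset_def by auto
qed


definition NZ :: "'a vec set" where "NZ = {v \<in> carrier_vec 3. v \<noteq> 0\<^sub>v 3}"

lemma NZ_card: "finite NZ" "card NZ = N"
proof -
  have "NZ = carrier_vec 3 - {0\<^sub>v 3}" unfolding NZ_def by auto
  moreover have "card (carrier_vec 3 :: 'a vec set) = q^3" using card_cv[where 'b='a, of 3] cardq by simp
  moreover have "card (carrier_vec 3 - {0\<^sub>v 3 :: 'a vec}) = card (carrier_vec 3 :: 'a vec set) - 1"
    by (rule card_Diff_singleton) simp
  ultimately show "card NZ = N" by simp
  show "finite NZ" unfolding NZ_def by (rule finite_subset[OF _ finite_cv[of 3]]) auto
qed

lemma trans3:
  assumes x: "x \<in> carrier_vec 3" "x \<noteq> 0\<^sub>v 3" and y: "y \<in> carrier_vec 3" "y \<noteq> 0\<^sub>v 3"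
  shows "\<exists>k. \<sigma> ^\<^sub>m k *\<^sub>v x = y"
proof -
  let ?f = "\<lambda>k. \<sigma> ^\<^sub>m k *\<^sub>v x"
  have inj: "inj_on ?f {0..<N}"
  proof (rule inj_onI, rule ccontr)
    have main: "?f i = ?f j \<Longrightarrow> i < j \<Longrightarrow> j < N \<Longrightarrow> False" for i j
    proof -
      assume e: "?f i = ?f j" and ij: "i < j" "j < N"
      let ?z = "\<sigma> ^\<^sub>m i *\<^sub>v x"
      have zc: "?z \<in> carrier_vec 3" using x by simp
      have z0: "?z \<noteq> 0\<^sub>v 3" using pw_vec_zero[OF x(1)] x(2) by blast
      have "\<sigma> ^\<^sub>m (j - i) *\<^sub>v ?z = \<sigma> ^\<^sub>m (j - i + i) *\<^sub>v x" using x by (simp only: pw_vec_add)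
      also have "\<dots> = ?z" using e ij by simp
      finally have "\<sigma> ^\<^sub>m (j - i) = 1\<^sub>m 3" by (rule key1[OF zc z0])
      moreover have "\<sigma> ^\<^sub>m (j - i) \<noteq> 1\<^sub>m 3" using minN ij by auto
      ultimately show False by simp
    qed
    fix i j assume "i \<in> {0..<N}" "j \<in> {0..<N}" "?f i = ?f j" "i \<noteq> j"
    thus False using main[of i j] main[of j i] by (cases "i < j") auto
  qed
  have sub: "?f ` {0..<N} \<subseteq> NZ"
  proof
    fix v assume "v \<in> ?f ` {0..<N}"
    then obtain k where "v = ?f k" by auto
    thus "v \<in> NZ" unfolding NZ_def using x pw_vec_zero[OF x(1), of k] by auto
  qed
  have "card (?f ` {0..<N}) = N" using inj by (simp add: card_image)
  hence "?f ` {0..<N} = NZ" using card_subset_eq[OF NZ_card(1) sub] NZ_card(2) by simp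
  moreover have "y \<in> NZ" unfolding NZ_def using y by simp
  ultimately have "y \<in> ?f ` {0..<N}" by simp
  thus ?thesis by blast
qed


definition gk :: "nat \<Rightarrow> 'a mat" where
  "gk k = four_block_mat (\<sigma> ^\<^sub>m k) (0\<^sub>m 3 1) (0\<^sub>m 1 3) (1\<^sub>m 1)"

lemma groupC_eq: "groupC \<sigma> = range gk"
  unfolding groupC_def gk_def by auto

lemma gk_ext:
  assumes x: "x \<in> carrier_vec 3"
  shows "gk k *\<^sub>v ext x t = ext (\<sigma> ^\<^sub>m k *\<^sub>v x) t"
proof (rule eq_vecI)
  have d: "dim_row (gk k) = 4" "dim_col (gk k) = 4" unfolding gk_def using carr by auto
  fix i assume "i < dim_vec (ext (\<sigma> ^\<^sub>m k *\<^sub>v x) t)"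
  hence i: "i < 4" by simp
  have r: "(gk k *\<^sub>v ext x t) $ i = (gk k) $$ (i,0) * ext x t $ 0 + (gk k) $$ (i,1) * ext x t $ 1
     + (gk k) $$ (i,2) * ext x t $ 2 + (gk k) $$ (i,3) * ext x t $ 3"
    using i d by (simp add: scalar_prod_def sum4)
  have g: "i' < 4 \<Longrightarrow> j < 4 \<Longrightarrow> (gk k) $$ (i',j) = (if i' < 3 then (if j < 3 then (\<sigma> ^\<^sub>m k) $$ (i',j) else 0)
     else (if j < 3 then 0 else 1))" for i' j
    unfolding gk_def using carr by (simp add: index_mat_four_block)
  show "(gk k *\<^sub>v ext x t) $ i = ext (\<sigma> ^\<^sub>m k *\<^sub>v x) t $ i"
    using i unfolding less4 r
    by (elim disjE) (simp_all add: g mat_vec3[OF pw_carr x])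
qed (use carr in \<open>simp add: gk_def\<close>)


lemma card_points_off: "card (points_off :: 'a vec set set) = N"
proof -
  have e: "(points_off :: 'a vec set set) = (\<lambda>x. pt (ext x 1)) ` NZ"
  proof
    show "points_off \<subseteq> (\<lambda>x. pt (ext x 1)) ` NZ"
      using points_off_ext unfolding NZ_def by fastforce
    show "(\<lambda>x. pt (ext x 1)) ` NZ \<subseteq> points_off"
      using pt_ext_off unfolding NZ_def by auto
  qed
  have i: "inj_on (\<lambda>x. pt (ext x 1)) NZ"
    by (rule inj_onI) (use pt_ext_inj in \<open>auto simp: NZ_def\<close>)
  show ?thesis unfolding e card_image[OF i] using NZ_card by simp
qed

lemma gk_one: assumes "\<sigma> ^\<^sub>m k = 1\<^sub>m 3" "v \<in> carrier_vec 4" shows "gk k *\<^sub>v v = v"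
proof -
  have "gk k *\<^sub>v v = gk k *\<^sub>v ext (top v) (v $ 3)" using ext_top[OF assms(2)] by simp
  also have "\<dots> = ext (top v) (v $ 3)" by (simp add: gk_ext assms(1))
  finally show ?thesis using ext_top[OF assms(2)] by simp
qed

lemma semireg:
  assumes g: "g \<in> groupC \<sigma>" and P: "P \<in> points_off" and fx: "act g P = P" and Q: "Q \<in> pg_points"
  shows "act g Q = Q"
proof -
  obtain k where gk: "g = gk k" using g groupC_eq by auto
  obtain x where x: "x \<in> carrier_vec 3" "x \<noteq> 0\<^sub>v 3" and Px: "P = pt (ext x 1)"
    using points_off_ext[OF P] by blast
  have "ext x 1 \<in> P" unfolding Px pt_def by (rule CollectI, rule exI[of _ 1]) simp
  hence "g *\<^sub>v ext x 1 \<in> act g P" unfolding act_def by simp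
  hence "ext (\<sigma> ^\<^sub>m k *\<^sub>v x) 1 \<in> P" using fx gk gk_ext[OF x(1)] by simp
  then obtain c where "ext (\<sigma> ^\<^sub>m k *\<^sub>v x) 1 = c \<cdot>\<^sub>v ext x 1" unfolding Px pt_def by auto
  hence "ext (\<sigma> ^\<^sub>m k *\<^sub>v x) 1 = ext (c \<cdot>\<^sub>v x) c" using x by (simp add: ext_smult)
  hence "\<sigma> ^\<^sub>m k *\<^sub>v x = c \<cdot>\<^sub>v x" "c = 1" using x by simp_all
  hence "\<sigma> ^\<^sub>m k *\<^sub>v x = x" by simp
  hence one: "\<sigma> ^\<^sub>m k = 1\<^sub>m 3" by (rule key1[OF x])
  obtain w where w: "w \<in> carrier_vec 4" and Qw: "Q = pt w" using Q unfolding pg_points_pt by auto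
  have "act g Q = (\<lambda>v. v) ` Q" unfolding act_def gk
    by (rule image_cong) (use gk_one[OF one] pt_sub[OF w] Qw in auto)
  thus ?thesis by simp
qed

end



lemma neg_smult_cancel: "z \<in> carrier_vec n \<Longrightarrow> (c::'a::field) \<cdot>\<^sub>v z + (- c) \<cdot>\<^sub>v z = 0\<^sub>v n"
  by (intro eq_vecI) auto

lemma comb_zero:
  assumes x: "x \<in> carrier_vec n" and y: "y \<in> carrier_vec n" and e: "1 \<cdot>\<^sub>v x + (- c) \<cdot>\<^sub>v y = 0\<^sub>v n"
  shows "x = (c::'a::field) \<cdot>\<^sub>v y"
proof (rule eq_vecI)
  fix i assume "i < dim_vec (c \<cdot>\<^sub>v y)"
  hence i: "i < n" using y by simp
  have "(1 \<cdot>\<^sub>v x + (- c) \<cdot>\<^sub>v y) $ i = 0\<^sub>v n $ i" by (simp only: e)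
  hence "x $ i + (- c) * y $ i = 0" using i x y by simp
  thus "x $ i = (c \<cdot>\<^sub>v y) $ i" using i y by (simp add: eq_neg_iff_add_eq_0)
qed (use x y in simp)

lemma comb_solve:
  assumes x: "x \<in> carrier_vec n" and y: "y \<in> carrier_vec n" and e: "d \<cdot>\<^sub>v x = x + f \<cdot>\<^sub>v y"
    and d: "d \<noteq> (1::'a::field)"
  shows "x = (f / (d - 1)) \<cdot>\<^sub>v y"
proof (rule eq_vecI)
  fix i assume "i < dim_vec ((f / (d - 1)) \<cdot>\<^sub>v y)"
  hence i: "i < n" using y by simp
  have "(d \<cdot>\<^sub>v x) $ i = (x + f \<cdot>\<^sub>v y) $ i" by (simp only: e)
  hence "d * x $ i = x $ i + f * y $ i" using i x y by simp
  hence "(d - 1) * x $ i = f * y $ i" by (simp add: algebra_simps)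
  thus "x $ i = ((f / (d - 1)) \<cdot>\<^sub>v y) $ i" using i y d by (simp add: field_simps)
qed (use x y in simp)

lemma L_eq_char:
  assumes x: "x \<in> carrier_vec 3" and y: "y \<in> carrier_vec 3" and x': "x' \<in> carrier_vec 3"
    and y': "y' \<in> carrier_vec 3" "y' \<noteq> 0\<^sub>v 3" and e: "L x' y' = L x y"
  shows "\<exists>e f. e \<noteq> 0 \<and> y' = e \<cdot>\<^sub>v y \<and> x' = x + f \<cdot>\<^sub>v y"
proof -
  have "ext y' 0 \<in> L x y" using L_b[OF x' y'(1)] e by simp
  then obtain c where c: "y' = 0 \<cdot>\<^sub>v x + c \<cdot>\<^sub>v y" using L_memD[OF x y y'(1)] by blast
  have yc: "y' = c \<cdot>\<^sub>v y" unfolding c using x y by (intro vec3_eqI) auto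
  have c0: "c \<noteq> 0"
  proof
    assume "c = 0"
    hence "y' = 0\<^sub>v 3" unfolding yc using y by (intro vec3_eqI) auto
    thus False using y' by simp
  qed
  have "ext x' 1 \<in> L x y" using L_a[OF x' y'(1)] e by simp
  then obtain f where f: "x' = 1 \<cdot>\<^sub>v x + f \<cdot>\<^sub>v y" using L_memD[OF x y x'] by blast
  have "x' = x + f \<cdot>\<^sub>v y" unfolding f using x y by (intro vec3_eqI) auto
  thus ?thesis using yc c0 by blast
qed

lemma L_eq_intro:
  assumes x: "x \<in> carrier_vec 3" and y: "y \<in> carrier_vec 3" and e: "e \<noteq> 0"
  shows "L (x + f \<cdot>\<^sub>v y) (e \<cdot>\<^sub>v y) = L x y"
proof
  show "L (x + f \<cdot>\<^sub>v y) (e \<cdot>\<^sub>v y) \<subseteq> L x y"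
  proof
    fix v assume "v \<in> L (x + f \<cdot>\<^sub>v y) (e \<cdot>\<^sub>v y)"
    then obtain s c where v: "v = ext (s \<cdot>\<^sub>v (x + f \<cdot>\<^sub>v y) + c \<cdot>\<^sub>v (e \<cdot>\<^sub>v y)) s" unfolding L_def by auto
    have "s \<cdot>\<^sub>v (x + f \<cdot>\<^sub>v y) + c \<cdot>\<^sub>v (e \<cdot>\<^sub>v y) = s \<cdot>\<^sub>v x + (s * f + c * e) \<cdot>\<^sub>v y"
      using x y by (intro vec3_eqI) (auto simp: algebra_simps)
    thus "v \<in> L x y" unfolding v using L_mem[OF x y] by simp
  qed
  show "L x y \<subseteq> L (x + f \<cdot>\<^sub>v y) (e \<cdot>\<^sub>v y)"
  proof
    fix v assume "v \<in> L x y"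
    then obtain s c where v: "v = ext (s \<cdot>\<^sub>v x + c \<cdot>\<^sub>v y) s" unfolding L_def by auto
    have "s \<cdot>\<^sub>v x + c \<cdot>\<^sub>v y = s \<cdot>\<^sub>v (x + f \<cdot>\<^sub>v y) + ((c - s * f) / e) \<cdot>\<^sub>v (e \<cdot>\<^sub>v y)"
      using x y e by (intro vec3_eqI) (auto simp: field_simps)
    thus "v \<in> L (x + f \<cdot>\<^sub>v y) (e \<cdot>\<^sub>v y)" unfolding v using L_mem[of "x + f \<cdot>\<^sub>v y" "e \<cdot>\<^sub>v y"] x y by simp
  qed
qed

context singer begin

lemma pw_lincomb: "x \<in> carrier_vec 3 \<Longrightarrow> y \<in> carrier_vec 3 \<Longrightarrow>
   \<sigma> ^\<^sub>m k *\<^sub>v (s \<cdot>\<^sub>v x + c \<cdot>\<^sub>v y) = s \<cdot>\<^sub>v (\<sigma> ^\<^sub>m k *\<^sub>v x) + c \<cdot>\<^sub>v (\<sigma> ^\<^sub>m k *\<^sub>v y)"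
  by (simp add: mult_add_distrib_mat_vec[OF pw_carr] mult_mat_vec[OF pw_carr])

lemma act_gk_L:
  assumes x: "x \<in> carrier_vec 3" and y: "y \<in> carrier_vec 3"
  shows "act (gk k) (L x y) = L (\<sigma> ^\<^sub>m k *\<^sub>v x) (\<sigma> ^\<^sub>m k *\<^sub>v y)"
proof -
  have eq: "gk k *\<^sub>v ext (s \<cdot>\<^sub>v x + c \<cdot>\<^sub>v y) s = ext (s \<cdot>\<^sub>v (\<sigma> ^\<^sub>m k *\<^sub>v x) + c \<cdot>\<^sub>v (\<sigma> ^\<^sub>m k *\<^sub>v y)) s" for s c
    using x y by (simp add: gk_ext pw_lincomb)
  show ?thesis unfolding act_def L_def
  proof
    show "(*\<^sub>v) (gk k) ` {ext (s \<cdot>\<^sub>v x + c \<cdot>\<^sub>v y) s |s c. True}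
      \<subseteq> {ext (s \<cdot>\<^sub>v (\<sigma> ^\<^sub>m k *\<^sub>v x) + c \<cdot>\<^sub>v (\<sigma> ^\<^sub>m k *\<^sub>v y)) s |s c. True}"
    proof
      fix v assume "v \<in> (*\<^sub>v) (gk k) ` {ext (s \<cdot>\<^sub>v x + c \<cdot>\<^sub>v y) s |s c. True}"
      then obtain s c where "v = gk k *\<^sub>v ext (s \<cdot>\<^sub>v x + c \<cdot>\<^sub>v y) s" by blast
      hence "v = ext (s \<cdot>\<^sub>v (\<sigma> ^\<^sub>m k *\<^sub>v x) + c \<cdot>\<^sub>v (\<sigma> ^\<^sub>m k *\<^sub>v y)) s" using eq by simp
      thus "v \<in> {ext (s \<cdot>\<^sub>v (\<sigma> ^\<^sub>m k *\<^sub>v x) + c \<cdot>\<^sub>v (\<sigma> ^\<^sub>m k *\<^sub>v y)) s |s c. True}" by blast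
    qed
    show "{ext (s \<cdot>\<^sub>v (\<sigma> ^\<^sub>m k *\<^sub>v x) + c \<cdot>\<^sub>v (\<sigma> ^\<^sub>m k *\<^sub>v y)) s |s c. True}
      \<subseteq> (*\<^sub>v) (gk k) ` {ext (s \<cdot>\<^sub>v x + c \<cdot>\<^sub>v y) s |s c. True}"
    proof
      fix v assume "v \<in> {ext (s \<cdot>\<^sub>v (\<sigma> ^\<^sub>m k *\<^sub>v x) + c \<cdot>\<^sub>v (\<sigma> ^\<^sub>m k *\<^sub>v y)) s |s c. True}"
      then obtain s c where v: "v = ext (s \<cdot>\<^sub>v (\<sigma> ^\<^sub>m k *\<^sub>v x) + c \<cdot>\<^sub>v (\<sigma> ^\<^sub>m k *\<^sub>v y)) s" by auto
      show "v \<in> (*\<^sub>v) (gk k) ` {ext (s \<cdot>\<^sub>v x + c \<cdot>\<^sub>v y) s |s c. True}"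
        unfolding v eq[symmetric] by blast
    qed
  qed
qed

lemma good_pw:
  assumes g: "good x y" shows "good (\<sigma> ^\<^sub>m k *\<^sub>v x) (\<sigma> ^\<^sub>m k *\<^sub>v y)"
proof -
  have x: "x \<in> carrier_vec 3" and y: "y \<in> carrier_vec 3" and y0: "y \<noteq> 0\<^sub>v 3" and nx: "\<forall>c. x \<noteq> c \<cdot>\<^sub>v y"
    using g unfolding good_def by auto
  have "\<sigma> ^\<^sub>m k *\<^sub>v y \<noteq> 0\<^sub>v 3" using pw_vec_zero[OF y] y0 by blast
  moreover have "\<sigma> ^\<^sub>m k *\<^sub>v x \<noteq> c \<cdot>\<^sub>v (\<sigma> ^\<^sub>m k *\<^sub>v y)" for c
  proof
    assume e: "\<sigma> ^\<^sub>m k *\<^sub>v x = c \<cdot>\<^sub>v (\<sigma> ^\<^sub>m k *\<^sub>v y)"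
    have "\<sigma> ^\<^sub>m k *\<^sub>v (1 \<cdot>\<^sub>v x + (- c) \<cdot>\<^sub>v y) = 1 \<cdot>\<^sub>v (\<sigma> ^\<^sub>m k *\<^sub>v x) + (- c) \<cdot>\<^sub>v (\<sigma> ^\<^sub>m k *\<^sub>v y)"
      by (rule pw_lincomb[OF x y])
    also have "\<dots> = 0\<^sub>v 3" unfolding e using pw_vec_carr[OF y, of k] by (simp add: neg_smult_cancel)
    finally have "1 \<cdot>\<^sub>v x + (- c) \<cdot>\<^sub>v y = 0\<^sub>v 3" using pw_vec_zero x y by simp
    hence "x = c \<cdot>\<^sub>v y" by (rule comb_zero[OF x y])
    thus False using nx by simp
  qed
  ultimately show ?thesis unfolding good_def using x y by simp
qed

lemma smat_vec: "z \<in> carrier_vec 3 \<Longrightarrow> ((d::'a) \<cdot>\<^sub>m 1\<^sub>m 3) *\<^sub>v z = d \<cdot>\<^sub>v z"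
  by (intro eq_vecI) (auto simp: scalar_prod_def sum3 less3)

lemma stab:
  assumes g: "good x y" and e: "L (\<sigma> ^\<^sub>m m *\<^sub>v x) (\<sigma> ^\<^sub>m m *\<^sub>v y) = L x y"
  shows "\<sigma> ^\<^sub>m m = 1\<^sub>m 3"
proof -
  have x: "x \<in> carrier_vec 3" and y: "y \<in> carrier_vec 3" and y0: "y \<noteq> 0\<^sub>v 3" and nx: "\<forall>c. x \<noteq> c \<cdot>\<^sub>v y"
    using g unfolding good_def by auto
  have y'0: "\<sigma> ^\<^sub>m m *\<^sub>v y \<noteq> 0\<^sub>v 3" using pw_vec_zero[OF y] y0 by blast
  obtain d f where d: "d \<noteq> 0" and yd: "\<sigma> ^\<^sub>m m *\<^sub>v y = d \<cdot>\<^sub>v y" and xf: "\<sigma> ^\<^sub>m m *\<^sub>v x = x + f \<cdot>\<^sub>v y"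
    using L_eq_char[OF x y _ _ y'0 e] x y by auto
  have sd: "\<sigma> ^\<^sub>m m = d \<cdot>\<^sub>m 1\<^sub>m 3" by (rule key[OF y y0 yd])
  have "d \<cdot>\<^sub>v x = x + f \<cdot>\<^sub>v y" using xf unfolding sd smat_vec[OF x] .
  have d1: "d = 1"
  proof (rule ccontr)
    assume "d \<noteq> 1"
    hence "x = (f / (d - 1)) \<cdot>\<^sub>v y" by (rule comb_solve[OF x y \<open>d \<cdot>\<^sub>v x = x + f \<cdot>\<^sub>v y\<close>])
    thus False using nx by simp
  qed
  show ?thesis unfolding sd d1 by (intro mat3_eqI) auto
qed

definition Of :: "'a vec \<Rightarrow> 'a vec \<Rightarrow> 'a vec set set" where
  "Of x y = {L (\<sigma> ^\<^sub>m k *\<^sub>v x) (\<sigma> ^\<^sub>m k *\<^sub>v y) | k. True}"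

lemma orbit_L:
  assumes x: "x \<in> carrier_vec 3" and y: "y \<in> carrier_vec 3"
  shows "orbitC \<sigma> (L x y) = Of x y"
proof -
  have "orbitC \<sigma> (L x y) = {act (gk k) (L x y) | k. True}"
    unfolding orbitC_def groupC_eq by blast
  also have "\<dots> = Of x y" unfolding Of_def act_gk_L[OF x y] ..
  finally show ?thesis .
qed

lemma pw_shift: "z \<in> carrier_vec 3 \<Longrightarrow> \<sigma> ^\<^sub>m (k + N * m) *\<^sub>v z = \<sigma> ^\<^sub>m k *\<^sub>v z"
  unfolding pw_add pw_N_mult using right_mult_one_mat[OF pw_carr[of k]] by simp

lemma Of_shift:
  assumes x: "x \<in> carrier_vec 3" and y: "y \<in> carrier_vec 3"
  shows "Of (\<sigma> ^\<^sub>m m *\<^sub>v x) (\<sigma> ^\<^sub>m m *\<^sub>v y) = Of x y"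
proof
  show "Of (\<sigma> ^\<^sub>m m *\<^sub>v x) (\<sigma> ^\<^sub>m m *\<^sub>v y) \<subseteq> Of x y"
    unfolding Of_def using x y by (auto simp: pw_vec_add)
  show "Of x y \<subseteq> Of (\<sigma> ^\<^sub>m m *\<^sub>v x) (\<sigma> ^\<^sub>m m *\<^sub>v y)"
  proof
    fix l assume "l \<in> Of x y"
    then obtain k where l: "l = L (\<sigma> ^\<^sub>m k *\<^sub>v x) (\<sigma> ^\<^sub>m k *\<^sub>v y)" unfolding Of_def by auto
    obtain n' where n': "N = Suc n'" using Npos by (cases N) auto
    have e: "k + (N - 1) * m + m = k + N * m" unfolding n' by simp
    have "l = L (\<sigma> ^\<^sub>m (k + (N - 1) * m) *\<^sub>v (\<sigma> ^\<^sub>m m *\<^sub>v x)) (\<sigma> ^\<^sub>m (k + (N - 1) * m) *\<^sub>v (\<sigma> ^\<^sub>m m *\<^sub>v y))"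
      unfolding l using x y by (simp only: pw_vec_add e pw_shift)
    thus "l \<in> Of (\<sigma> ^\<^sub>m m *\<^sub>v x) (\<sigma> ^\<^sub>m m *\<^sub>v y)" unfolding Of_def by blast
  qed
qed

lemma Of_card:
  assumes g: "good x y" shows "card (Of x y) = N"
proof -
  have x: "x \<in> carrier_vec 3" and y: "y \<in> carrier_vec 3" using g unfolding good_def by auto
  let ?f = "\<lambda>k. L (\<sigma> ^\<^sub>m k *\<^sub>v x) (\<sigma> ^\<^sub>m k *\<^sub>v y)"
  have "Of x y = ?f ` {0..<N}"
  proof
    show "?f ` {0..<N} \<subseteq> Of x y" unfolding Of_def by auto
    show "Of x y \<subseteq> ?f ` {0..<N}"
    proof
      fix l assume "l \<in> Of x y"
      then obtain k where l: "l = ?f k" unfolding Of_def by auto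
      have "l = ?f (k mod N)" unfolding l using pw_mod[of k] by simp
      moreover have "k mod N \<in> {0..<N}" using Npos by simp
      ultimately show "l \<in> ?f ` {0..<N}" by blast
    qed
  qed
  moreover have "inj_on ?f {0..<N}"
  proof (rule inj_onI, rule ccontr)
    have main: "?f i = ?f j \<Longrightarrow> i < j \<Longrightarrow> j < N \<Longrightarrow> False" for i j
    proof -
      assume e: "?f i = ?f j" and ij: "i < j" "j < N"
      let ?X = "\<sigma> ^\<^sub>m i *\<^sub>v x" and ?Y = "\<sigma> ^\<^sub>m i *\<^sub>v y"
      have gX: "good ?X ?Y" by (rule good_pw[OF g])
      have "\<sigma> ^\<^sub>m (j - i) *\<^sub>v ?X = \<sigma> ^\<^sub>m j *\<^sub>v x" "\<sigma> ^\<^sub>m (j - i) *\<^sub>v ?Y = \<sigma> ^\<^sub>m j *\<^sub>v y"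
        using x y ij by (simp_all add: pw_vec_add)
      hence "L (\<sigma> ^\<^sub>m (j - i) *\<^sub>v ?X) (\<sigma> ^\<^sub>m (j - i) *\<^sub>v ?Y) = L ?X ?Y" using e by simp
      hence "\<sigma> ^\<^sub>m (j - i) = 1\<^sub>m 3" by (rule stab[OF gX])
      moreover have "\<sigma> ^\<^sub>m (j - i) \<noteq> 1\<^sub>m 3" using minN ij by auto
      ultimately show False by simp
    qed
    fix i j assume "i \<in> {0..<N}" "j \<in> {0..<N}" "?f i = ?f j" "i \<noteq> j"
    thus False using main[of i j] main[of j i] by (cases "i < j") auto
  qed
  ultimately show ?thesis by (simp add: card_image)
qed


definition e0 :: "'a vec" where "e0 = unit_vec 3 0"

fun r1 :: "'a option \<Rightarrow> 'a" where "r1 None = 0" | "r1 (Some c) = 1"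
fun r2 :: "'a option \<Rightarrow> 'a" where "r2 None = 1" | "r2 (Some c) = c"

definition xr :: "'a option \<Rightarrow> 'a vec" where
  "xr op = vec 3 (\<lambda>i. if i = 1 then r1 op else if i = 2 then r2 op else 0)"

definition rep :: "'a option \<Rightarrow> 'a vec set" where "rep op = L (xr op) e0"

lemma e0_carr[simp]: "e0 \<in> carrier_vec 3" unfolding e0_def by simp
lemma xr_carr[simp]: "xr op \<in> carrier_vec 3" unfolding xr_def by simp
lemma e0_idx[simp]: "e0 $ 0 = 1" "e0 $ 1 = 0" "e0 $ 2 = 0" "e0 $ Suc 0 = 0" "dim_vec e0 = 3" unfolding e0_def by auto
lemma xr_idx[simp]: "xr op $ 0 = 0" "xr op $ 1 = r1 op" "xr op $ 2 = r2 op" "xr op $ Suc 0 = r1 op" "dim_vec (xr op) = 3"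
  unfolding xr_def by auto
lemma e0_nz: "e0 \<noteq> 0\<^sub>v 3"
proof
  assume "e0 = 0\<^sub>v 3"
  hence "e0 $ 0 = 0\<^sub>v 3 $ 0" by simp
  thus False by simp
qed

lemma r_nz: "r1 op \<noteq> 0 \<or> r2 op \<noteq> 0" by (cases op) auto

lemma good_rep: "good (xr op) e0"
  unfolding good_def
proof (intro conjI allI)
  fix c show "xr op \<noteq> c \<cdot>\<^sub>v e0"
  proof
    assume e: "xr op = c \<cdot>\<^sub>v e0"
    have "xr op $ 1 = (c \<cdot>\<^sub>v e0) $ 1" "xr op $ 2 = (c \<cdot>\<^sub>v e0) $ 2" by (simp_all only: e)
    hence "r1 op = 0" "r2 op = 0" by (simp_all add: e0_def)
    thus False using r_nz by simp
  qed
qed (simp_all add: e0_nz)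

lemma orbit_move:
  assumes x: "x \<in> carrier_vec 3" and y: "y \<in> carrier_vec 3"
  shows "orbitC \<sigma> (L x y) = orbitC \<sigma> (L (\<sigma> ^\<^sub>m m *\<^sub>v x) (\<sigma> ^\<^sub>m m *\<^sub>v y))"
  using orbit_L[OF x y] orbit_L[OF pw_vec_carr[OF x] pw_vec_carr[OF y]] Of_shift[OF x y] by simp

lemma cover:
  assumes l: "l \<in> lines_off"
  shows "\<exists>op. orbitC \<sigma> l = orbitC \<sigma> (rep op)"
proof -
  obtain x y where g: "good x y" and lxy: "l = L x y" using LR[OF l] by blast
  have x: "x \<in> carrier_vec 3" and y: "y \<in> carrier_vec 3" and y0: "y \<noteq> 0\<^sub>v 3"
    using g unfolding good_def by auto
  obtain k where k: "\<sigma> ^\<^sub>m k *\<^sub>v y = e0" using trans3[OF y y0 e0_carr e0_nz] by blast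
  define X where "X = \<sigma> ^\<^sub>m k *\<^sub>v x"
  have gX: "good X e0" unfolding X_def k[symmetric] by (rule good_pw[OF g])
  have Xc: "X \<in> carrier_vec 3" using gX unfolding good_def by simp
  have "\<exists>op d. d \<noteq> 0 \<and> d \<cdot>\<^sub>v X = xr op + (d * X $ 0) \<cdot>\<^sub>v e0"
  proof (cases "X $ 1 = 0")
    case False
    show ?thesis
      by (rule exI[of _ "Some (X $ 2 / X $ 1)"], rule exI[of _ "1 / X $ 1"])
         (use False Xc in \<open>auto intro!: vec3_eqI simp: field_simps\<close>)
  next
    case True
    have "X $ 2 \<noteq> 0"
    proof
      assume "X $ 2 = 0"
      hence "X = (X $ 0) \<cdot>\<^sub>v e0" using True Xc by (intro vec3_eqI) auto
      thus False using gX unfolding good_def by blast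
    qed
    show ?thesis
      by (rule exI[of _ None], rule exI[of _ "1 / X $ 2"])
         (use True \<open>X $ 2 \<noteq> 0\<close> Xc in \<open>auto intro!: vec3_eqI simp: field_simps\<close>)
  qed
  then obtain op d where d: "d \<noteq> 0" and dX: "d \<cdot>\<^sub>v X = xr op + (d * X $ 0) \<cdot>\<^sub>v e0" by blast
  obtain j where j: "\<sigma> ^\<^sub>m j = d \<cdot>\<^sub>m 1\<^sub>m 3" using scalar_pw[OF d] by blast
  have "\<sigma> ^\<^sub>m (j + k) *\<^sub>v x = d \<cdot>\<^sub>v X" unfolding X_def
    using x by (simp only: pw_vec_add[symmetric] j smat_vec[OF pw_vec_carr[OF x]])
  moreover have "\<sigma> ^\<^sub>m (j + k) *\<^sub>v y = d \<cdot>\<^sub>v e0"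
    using y by (simp only: pw_vec_add[symmetric] j k smat_vec[OF e0_carr])
  ultimately have "orbitC \<sigma> l = orbitC \<sigma> (L (d \<cdot>\<^sub>v X) (d \<cdot>\<^sub>v e0))"
    unfolding lxy using orbit_move[OF x y, of "j + k"] by simp
  also have "L (d \<cdot>\<^sub>v X) (d \<cdot>\<^sub>v e0) = rep op"
    unfolding dX rep_def by (rule L_eq_intro[OF xr_carr e0_carr d])
  finally show ?thesis by blast
qed

lemma rep_inj:
  assumes e: "orbitC \<sigma> (rep op1) = orbitC \<sigma> (rep op2)"
  shows "op1 = op2"
proof -
  have "rep op2 \<in> orbitC \<sigma> (rep op2)"
  proof -
    have "rep op2 = L (\<sigma> ^\<^sub>m 0 *\<^sub>v xr op2) (\<sigma> ^\<^sub>m 0 *\<^sub>v e0)" unfolding rep_def using carr by simp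
    thus ?thesis unfolding rep_def orbit_L[OF xr_carr e0_carr] Of_def by blast
  qed
  hence "rep op2 \<in> orbitC \<sigma> (rep op1)" using e by simp
  hence "rep op2 \<in> Of (xr op1) e0" unfolding rep_def orbit_L[OF xr_carr e0_carr] .
  then obtain k where k: "L (xr op2) e0 = L (\<sigma> ^\<^sub>m k *\<^sub>v xr op1) (\<sigma> ^\<^sub>m k *\<^sub>v e0)"
    unfolding Of_def rep_def by blast
  obtain c f where c: "c \<noteq> 0" and ce: "e0 = c \<cdot>\<^sub>v (\<sigma> ^\<^sub>m k *\<^sub>v e0)"
    and xf: "xr op2 = \<sigma> ^\<^sub>m k *\<^sub>v xr op1 + f \<cdot>\<^sub>v (\<sigma> ^\<^sub>m k *\<^sub>v e0)"
    using L_eq_char[OF pw_vec_carr[OF xr_carr] pw_vec_carr[OF e0_carr] xr_carr e0_carr e0_nz k] by blast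
  define D where "D = 1 / c"
  have "\<sigma> ^\<^sub>m k *\<^sub>v e0 = D \<cdot>\<^sub>v e0" unfolding D_def
    by (subst ce) (use c in \<open>simp add: smult_smult_assoc\<close>)
  hence sk: "\<sigma> ^\<^sub>m k = D \<cdot>\<^sub>m 1\<^sub>m 3" by (rule key[OF e0_carr e0_nz])
  have xf': "xr op2 = D \<cdot>\<^sub>v xr op1 + f \<cdot>\<^sub>v (D \<cdot>\<^sub>v e0)"
    using xf unfolding sk smat_vec[OF xr_carr] smat_vec[OF e0_carr] .
  have "xr op2 $ 1 = (D \<cdot>\<^sub>v xr op1 + f \<cdot>\<^sub>v (D \<cdot>\<^sub>v e0)) $ 1" "xr op2 $ 2 = (D \<cdot>\<^sub>v xr op1 + f \<cdot>\<^sub>v (D \<cdot>\<^sub>v e0)) $ 2"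
    by (simp_all only: xf'[symmetric])
  hence "r1 op2 = D * r1 op1" "r2 op2 = D * r2 op1" by (simp_all add: e0_def)
  thus ?thesis by (cases op1; cases op2) auto
qed

lemma card_option: "card (UNIV :: 'a option set) = q + 1"
proof -
  have u: "(UNIV :: 'a option set) = insert None (Some ` UNIV)" by (auto intro: option.exhaust)
  have "card (insert None (Some ` (UNIV :: 'a set))) = Suc (card (Some ` (UNIV :: 'a set)))"
    by (rule card_insert_disjoint) auto
  hence "card (UNIV :: 'a option set) = Suc (card (Some ` (UNIV :: 'a set)))" by (subst u)
  also have "\<dots> = Suc q" using cardq by (simp add: card_image)
  finally show ?thesis by simp
qed

lemma count_orbits: "card {orbitC \<sigma> l | l. l \<in> (lines_off :: 'a vec set set)} = q + 1"
proof -
  have "{orbitC \<sigma> l | l. l \<in> (lines_off :: 'a vec set set)} = (\<lambda>op. orbitC \<sigma> (rep op)) ` UNIV"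
  proof
    show "{orbitC \<sigma> l | l. l \<in> (lines_off :: 'a vec set set)} \<subseteq> (\<lambda>op. orbitC \<sigma> (rep op)) ` UNIV"
      using cover by blast
    show "(\<lambda>op. orbitC \<sigma> (rep op)) ` UNIV \<subseteq> {orbitC \<sigma> l | l. l \<in> (lines_off :: 'a vec set set)}"
      unfolding rep_def using L_line[OF good_rep] by blast
  qed
  moreover have "inj (\<lambda>op. orbitC \<sigma> (rep op))" by (rule injI) (rule rep_inj)
  ultimately show ?thesis using card_option by (simp add: card_image)
qed

lemma orbit_size: "l \<in> lines_off \<Longrightarrow> card (orbitC \<sigma> l) = N"
proof -
  assume l: "l \<in> lines_off"
  obtain x y where g: "good x y" and lxy: "l = L x y" using LR[OF l] by blast
  have x: "x \<in> carrier_vec 3" and y: "y \<in> carrier_vec 3" using g unfolding good_def by auto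
  show ?thesis unfolding lxy orbit_L[OF x y] by (rule Of_card[OF g])
qed

end

theorem lemma3p4:
  fixes \<sigma> :: "'a::{field,finite} mat" and q :: nat
  assumes "card (UNIV :: 'a set) = q"
    and "\<sigma> \<in> carrier_mat 3 3" and "invertible_mat \<sigma>"
    and "\<sigma> ^\<^sub>m (q^3 - 1) = 1\<^sub>m 3"
    and "\<forall>k. 0 < k \<and> k < q^3 - 1 \<longrightarrow> \<sigma> ^\<^sub>m k \<noteq> 1\<^sub>m 3"
  shows "card {orbitC \<sigma> l | l. l \<in> (lines_off :: 'a vec set set)} = q + 1
       \<and> (\<forall>l \<in> (lines_off :: 'a vec set set). card (orbitC \<sigma> l) = q^3 - 1)
       \<and> card (points_off :: 'a vec set set) = q^3 - 1
       \<and> (\<forall>g \<in> groupC \<sigma>. \<forall>P \<in> (points_off :: 'a vec set set). act g P = P \<longrightarrow>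
             (\<forall>Q \<in> (pg_points :: 'a vec set set). act g Q = Q))"
proof -
  interpret singer \<sigma> q using assms by unfold_locales auto
  show ?thesis using count_orbits orbit_size card_points_off semireg by blast
qed

end
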